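(* Fix an integer $d\geq 3$ and $\rho<1$. There exist constants $C,c>0$ and a function $\epsilon(n)\to 0$ as $n\to\infty$ (all depending only on $d,\rho$) such that the following holds for all sufficiently large $n$. Let $G_n$ be a $d$-regular graph on $n$ vertices whose transition matrix has all eigenvalues other than $1$ of absolute value at most $\rho$, let $v\in G_n$, and let $G$ be obtained by adding a new vertex $v'$ and the edge $\{v,v'\}$. Then for every vertex $u\neq v'$ there is a set of vertices $S_u$ with $|S_u|\geq (1-\epsilon(n))n$ such that for every $w\in S_u$ and every integer $t$ with $C\log n\leq t\leq n$, $$\mathbb{P}_u(X_t=w,\ \tau_{v'}\geq t)\geq \frac{c}{n}.$$
   Context: $(X_t)$ is simple random walk on $G$, $\mathbb{P}_u$ its law with $X_0=u$, and $\tau_{v'}=\min\{t\geq1:X_t=v'\}$. *)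

theory Defs
  imports "Jordan_Normal_Form.Char_Poly"
begin

definition regular_graph_on :: "nat \<Rightarrow> nat \<Rightarrow> (nat \<Rightarrow> nat \<Rightarrow> bool) \<Rightarrow> bool" where
  "regular_graph_on n d E \<longleftrightarrow>
     (\<forall>x y. E x y \<longrightarrow> x < n \<and> y < n) \<and>
     (\<forall>x y. E x y \<longleftrightarrow> E y x) \<and>
     (\<forall>x. \<not> E x x) \<and>
     (\<forall>x<n. card {y. y < n \<and> E x y} = d)"

definition trans_mat :: "nat \<Rightarrow> nat \<Rightarrow> (nat \<Rightarrow> nat \<Rightarrow> bool) \<Rightarrow> real mat" where
  "trans_mat n d E = mat n n (\<lambda>(i, j). if E i j then 1 / real d else 0)"

text \<open>All eigenvalues (with multiplicity, over the complex numbers) other than one copy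
  of the eigenvalue 1 have absolute value at most rho.\<close>
definition nontrivial_eigs_bounded :: "real mat \<Rightarrow> real \<Rightarrow> bool" where
  "nontrivial_eigs_bounded A \<rho> \<longleftrightarrow>
     (\<exists>q. char_poly A = [:-1, 1:] * q \<and>
          (\<forall>z::complex. poly (map_poly complex_of_real q) z = 0 \<longrightarrow> cmod z \<le> \<rho>))"

text \<open>Graph G obtained by attaching a new vertex v' = n to v.\<close>
definition add_leaf :: "nat \<Rightarrow> nat \<Rightarrow> (nat \<Rightarrow> nat \<Rightarrow> bool) \<Rightarrow> nat \<Rightarrow> nat \<Rightarrow> bool" where
  "add_leaf n v E x y \<longleftrightarrow> E x y \<or> (x = v \<and> y = n) \<or> (x = n \<and> y = v)"

definition srw_step :: "nat set \<Rightarrow> (nat \<Rightarrow> nat \<Rightarrow> bool) \<Rightarrow> nat \<Rightarrow> nat \<Rightarrow> real" where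
  "srw_step V E x y = (if E x y then 1 / real (card {z \<in> V. E x z}) else 0)"

text \<open>avoid_prob V E a t u w = P_u(X_t = w, X_s \<noteq> a for all 1 \<le> s \<le> t-1),
  i.e. P_u(X_t = w, tau_a \<ge> t) with tau_a = min{s \<ge> 1. X_s = a}.\<close>
fun avoid_prob :: "nat set \<Rightarrow> (nat \<Rightarrow> nat \<Rightarrow> bool) \<Rightarrow> nat \<Rightarrow> nat \<Rightarrow> nat \<Rightarrow> nat \<Rightarrow> real" where
  "avoid_prob V E a 0 u w = (if u = w then 1 else 0)"
| "avoid_prob V E a (Suc t) u w =
     (\<Sum>y\<in>V. avoid_prob V E a t u y * (if t = 0 \<or> y \<noteq> a then 1 else 0) * srw_step V E y w)"

end

theory Submission
  imports Defs "Jordan_Normal_Form.Schur_Decomposition"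
begin


lemma mult_entry:
  assumes "A \<in> carrier_mat n m" "B \<in> carrier_mat m p" "i < n" "j < p"
  shows "(A * B) $$ (i,j) = (\<Sum>k<m. A $$ (i,k) * B $$ (k,j))"
  using assms by (auto simp: scalar_prod_def lessThan_atLeast0 intro!: sum.cong)

definition tr :: "'a::comm_ring_1 mat \<Rightarrow> 'a" where
  "tr M = (\<Sum>i<dim_row M. M $$ (i,i))"

lemma tr_comm:
  fixes X Y :: "'a::comm_ring_1 mat"
  assumes "X \<in> carrier_mat n n" "Y \<in> carrier_mat n n"
  shows "tr (X * Y) = tr (Y * X)"
proof -
  have "tr (X * Y) = (\<Sum>i<n. (X * Y) $$ (i,i))" unfolding tr_def using assms by simp
  also have "\<dots> = (\<Sum>i<n. \<Sum>k<n. X $$ (i,k) * Y $$ (k,i))"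
    by (rule sum.cong[OF refl], rule mult_entry[OF assms], auto)
  also have "\<dots> = (\<Sum>k<n. \<Sum>i<n. Y $$ (k,i) * X $$ (i,k))"
    by (subst sum.swap) (simp add: mult.commute)
  also have "\<dots> = (\<Sum>k<n. (Y * X) $$ (k,k))"
    by (rule sum.cong[OF refl], rule mult_entry[OF assms(2,1), symmetric], auto)
  also have "\<dots> = tr (Y * X)" unfolding tr_def using assms by simp
  finally show ?thesis .
qed

lemma upper_tri_pow:
  fixes B :: "'a::comm_ring_1 mat"
  assumes B: "B \<in> carrier_mat n n" and ut: "upper_triangular B"
  shows "upper_triangular (B ^\<^sub>m k) \<and> (\<forall>i<n. (B ^\<^sub>m k) $$ (i,i) = B $$ (i,i) ^ k)"
proof (induct k)
  case 0
  then show ?case using B by (auto simp: upper_triangular_def)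
next
  case (Suc k)
  have Bk: "B ^\<^sub>m k \<in> carrier_mat n n" using B by simp
  have ut2: "\<And>i j. i < n \<Longrightarrow> j < i \<Longrightarrow> B $$ (i,j) = 0" using ut B by (auto simp: upper_triangular_def)
  have utk: "\<And>i j. i < n \<Longrightarrow> j < i \<Longrightarrow> (B ^\<^sub>m k) $$ (i,j) = 0" using Suc B by (auto simp: upper_triangular_def)
  have 1: "upper_triangular (B ^\<^sub>m Suc k)"
  proof (rule upper_triangularI)
    fix i j assume "j < i" "i < dim_row (B ^\<^sub>m Suc k)"
    hence ij: "j < i" "i < n" using B by auto
    have "(B ^\<^sub>m Suc k) $$ (i,j) = (\<Sum>l<n. (B ^\<^sub>m k) $$ (i,l) * B $$ (l,j))"
      using mult_entry[OF Bk B] ij by auto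
    also have "\<dots> = 0"
    proof (rule sum.neutral, intro ballI)
      fix l assume l: "l \<in> {..<n}"
      show "(B ^\<^sub>m k) $$ (i,l) * B $$ (l,j) = 0"
      proof (cases "l < i")
        case True then show ?thesis using utk ij by auto
      next
        case False then show ?thesis using ut2 ij l by auto
      qed
    qed
    finally show "(B ^\<^sub>m Suc k) $$ (i,j) = 0" .
  qed
  have 2: "(B ^\<^sub>m Suc k) $$ (i,i) = B $$ (i,i) ^ Suc k" if i: "i < n" for i
  proof -
    have "(B ^\<^sub>m Suc k) $$ (i,i) = (\<Sum>l<n. (B ^\<^sub>m k) $$ (i,l) * B $$ (l,i))"
      using mult_entry[OF Bk B] i by auto
    also have "\<dots> = (B ^\<^sub>m k) $$ (i,i) * B $$ (i,i)"
    proof -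
      show ?thesis
      proof -
        have "(\<Sum>l<n. (B ^\<^sub>m k) $$ (i,l) * B $$ (l,i)) = (\<Sum>l\<in>{i}. (B ^\<^sub>m k) $$ (i,l) * B $$ (l,i))"
        proof (rule sum.mono_neutral_right)
          show "\<forall>l\<in>{..<n} - {i}. (B ^\<^sub>m k) $$ (i,l) * B $$ (l,i) = 0"
          proof
            fix l assume l: "l \<in> {..<n} - {i}"
            show "(B ^\<^sub>m k) $$ (i,l) * B $$ (l,i) = 0"
            proof (cases "l < i")
              case True then show ?thesis using utk i by auto
            next
              case False then have "i < l" using l by auto
              then show ?thesis using ut2 l by auto
            qed
          qed
        qed (use i in auto)
        then show ?thesis by simp
      qed
    qed
    finally show ?thesis using Suc i by simp
  qed
  show ?case using 1 2 by auto
qed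


lemma trace_pow_eigs:
  fixes A :: "complex mat"
  assumes A: "A \<in> carrier_mat n n" and c: "char_poly A = (\<Prod>e\<leftarrow>es. [:- e, 1:])"
  shows "tr (A ^\<^sub>m k) = (\<Sum>e\<leftarrow>es. e ^ k)"
proof -
  obtain B P Q where schur: "schur_decomposition A es = (B,P,Q)" by (cases "schur_decomposition A es", auto)
  from schur_decomposition[OF A c schur]
  have sim: "similar_mat_wit A B P Q" and ut: "upper_triangular B" and dg: "diag_mat B = es" by auto
  note D = similar_mat_witD2[OF A sim]
  have B: "B \<in> carrier_mat n n" and P: "P \<in> carrier_mat n n" and Q: "Q \<in> carrier_mat n n"
    using D by auto
  have Bk: "B ^\<^sub>m k \<in> carrier_mat n n" using B by simp
  have "A ^\<^sub>m k = P * B ^\<^sub>m k * Q" by (rule similar_mat_wit_pow_id[OF sim])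
  hence "tr (A ^\<^sub>m k) = tr (P * B ^\<^sub>m k * Q)" by simp
  also have "\<dots> = tr (Q * (P * B ^\<^sub>m k))"
    by (rule tr_comm[OF mult_carrier_mat[OF P Bk] Q])
  also have "Q * (P * B ^\<^sub>m k) = (Q * P) * B ^\<^sub>m k"
    using assoc_mult_mat[OF Q P Bk] by simp
  also have "\<dots> = B ^\<^sub>m k" using D Bk by simp
  also have "tr (B ^\<^sub>m k) = (\<Sum>i<n. B $$ (i,i) ^ k)"
    unfolding tr_def using upper_tri_pow[OF B ut, of k] Bk B by (simp add: carrier_matD)
  also have "\<dots> = (\<Sum>e\<leftarrow>es. e ^ k)"
    unfolding dg[symmetric] diag_mat_def using B
    by (simp add: sum_set_upt_conv_sum_list_nat[symmetric] atLeast0LessThan comp_def)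
  finally show ?thesis .
qed

lemma poly_lin_prod: "poly (\<Prod>e\<leftarrow>es. [:- e, 1:]) (x::'a::comm_ring_1) = (\<Prod>e\<leftarrow>es. x - e)"
  by (induct es) (auto simp: algebra_simps)

lemma prod_list_remove1: "x \<in> set xs \<Longrightarrow> prod_list (map f xs) = (f x :: 'a::comm_monoid_mult) * prod_list (map f (remove1 x xs))"
  by (induct xs) (auto simp: ac_simps)

lemma list_pow_bound:
  assumes "\<And>e. e \<in> set xs \<Longrightarrow> cmod e \<le> r" "0 \<le> r"
  shows "cmod (\<Sum>e\<leftarrow>xs. e ^ k) \<le> real (length xs) * r ^ k"
  using assms
proof (induct xs)
  case (Cons a xs)
  have "cmod (a ^ k) \<le> r ^ k" unfolding norm_power using Cons.prems by (auto intro: power_mono)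
  moreover have "cmod (\<Sum>e\<leftarrow>xs. e ^ k) \<le> real (length xs) * r ^ k" using Cons by auto
  ultimately show ?case using norm_triangle_ineq[of "a^k" "\<Sum>e\<leftarrow>xs. e ^ k"] by (auto simp: algebra_simps)
qed simp

lemma trace_bound:
  fixes Ar :: "real mat"
  assumes Ar: "Ar \<in> carrier_mat n n" and nb: "nontrivial_eigs_bounded Ar \<rho>"
    and r0: "\<rho> \<le> \<rho>0" "0 \<le> \<rho>0"
  shows "(\<Sum>i<n. (Ar ^\<^sub>m k) $$ (i,i)) \<le> 1 + real (n - 1) * \<rho>0 ^ k"
proof -
  obtain q where cq: "char_poly Ar = [:-1, 1:] * q"
    and rq: "\<And>z::complex. poly (map_poly complex_of_real q) z = 0 \<Longrightarrow> cmod z \<le> \<rho>"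
    using nb unfolding nontrivial_eigs_bounded_def by auto
  define Ac where "Ac = map_mat complex_of_real Ar"
  have Ac: "Ac \<in> carrier_mat n n" using Ar unfolding Ac_def by simp
  define qc where "qc = map_poly complex_of_real q"
  interpret h: map_poly_comm_ring_hom "complex_of_real" by unfold_locales
  have cpc: "char_poly Ac = [:-1, 1:] * qc"
    unfolding Ac_def qc_def of_real_hom.char_poly_hom[OF Ar] cq h.hom_mult
    by simp
  obtain es where es: "char_poly Ac = (\<Prod>e\<leftarrow>es. [:- e, 1:])" and len: "length es = n"
    using char_poly_factorized[OF Ac] by auto
  have "poly (char_poly Ac) 1 = 0" unfolding cpc by simp
  hence "(\<Prod>e\<leftarrow>es. 1 - e) = 0" unfolding es poly_lin_prod .
  hence one: "1 \<in> set es" by (auto simp: prod_list_zero_iff)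
  define rs where "rs = remove1 1 es"
  have "[:-1, 1:] * qc = [:-1,1:] * (\<Prod>e\<leftarrow>rs. [:- e, 1:])"
    using es cpc prod_list_remove1[OF one, of "\<lambda>e. [:- e, 1:]"] unfolding rs_def by simp
  hence qcp: "qc = (\<Prod>e\<leftarrow>rs. [:- e, 1:])" by (metis mult_cancel_left pCons_eq_0_iff zero_neq_one)
  have rsb: "cmod e \<le> \<rho>0" if e: "e \<in> set rs" for e
  proof -
    have "poly qc e = 0" unfolding qcp poly_lin_prod using e by (auto simp: prod_list_zero_iff)
    thus ?thesis using rq[of e] r0 unfolding qc_def by auto
  qed
  have lrs: "length rs = n - 1" unfolding rs_def using len one by (simp add: length_remove1)
  have nz: "cmod (\<Sum>e\<leftarrow>rs. e ^ k) \<le> real (n - 1) * \<rho>0 ^ k"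
    using list_pow_bound[of rs \<rho>0 k] rsb lrs r0 by auto
  have "tr (Ac ^\<^sub>m k) = (\<Sum>e\<leftarrow>es. e ^ k)" by (rule trace_pow_eigs[OF Ac es])
  also have "\<dots> = 1 + (\<Sum>e\<leftarrow>rs. e ^ k)"
    using sum_list_map_remove1[OF one, of "\<lambda>e. e ^ k"] unfolding rs_def by simp
  finally have t1: "tr (Ac ^\<^sub>m k) = 1 + (\<Sum>e\<leftarrow>rs. e ^ k)" .
  have "Ac ^\<^sub>m k = map_mat complex_of_real (Ar ^\<^sub>m k)"
    unfolding Ac_def by (rule of_real_hom.mat_hom_pow[OF Ar, symmetric])
  hence "tr (Ac ^\<^sub>m k) = complex_of_real (\<Sum>i<n. (Ar ^\<^sub>m k) $$ (i,i))"
    unfolding tr_def using Ar by (simp add: carrier_matD)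
  with t1 have "(\<Sum>e\<leftarrow>rs. e ^ k) = complex_of_real ((\<Sum>i<n. (Ar ^\<^sub>m k) $$ (i,i)) - 1)"
    by (simp add: algebra_simps)
  with nz have "cmod (complex_of_real ((\<Sum>i<n. (Ar ^\<^sub>m k) $$ (i,i)) - 1)) \<le> real (n - 1) * \<rho>0 ^ k" by metis
  hence "\<bar>(\<Sum>i<n. (Ar ^\<^sub>m k) $$ (i,i)) - 1\<bar> \<le> real (n - 1) * \<rho>0 ^ k" by (simp only: norm_of_real)
  thus ?thesis by linarith
qed



lemma cs_ineq:
  fixes x y :: "nat \<Rightarrow> real"
  shows "(\<Sum>i\<in>A. x i * y i)^2 \<le> (\<Sum>i\<in>A. (x i)^2) * (\<Sum>i\<in>A. (y i)^2)"
proof -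
  have "0 \<le> (\<Sum>i\<in>A. \<Sum>j\<in>A. (x i * y j - x j * y i)^2)" by (intro sum_nonneg) auto
  also have "\<dots> = (\<Sum>i\<in>A. \<Sum>j\<in>A. (x i)^2 * (y j)^2 + (x j)^2 * (y i)^2 - 2 * ((x i * y i) * (x j * y j)))"
    by (intro sum.cong refl) (simp add: power2_eq_square algebra_simps)
  also have "\<dots> = (\<Sum>i\<in>A. \<Sum>j\<in>A. (x i)^2 * (y j)^2) + (\<Sum>i\<in>A. \<Sum>j\<in>A. (x j)^2 * (y i)^2)
      - 2 * (\<Sum>i\<in>A. \<Sum>j\<in>A. (x i * y i) * (x j * y j))"
    by (simp add: sum_subtractf sum.distrib sum_distrib_left)
  also have "(\<Sum>i\<in>A. \<Sum>j\<in>A. (x j)^2 * (y i)^2) = (\<Sum>i\<in>A. \<Sum>j\<in>A. (x i)^2 * (y j)^2)"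
    by (subst sum.swap) simp
  also have "(\<Sum>i\<in>A. \<Sum>j\<in>A. (x i)^2 * (y j)^2) = (\<Sum>i\<in>A. (x i)^2) * (\<Sum>i\<in>A. (y i)^2)"
    by (simp add: sum_product)
  also have "(\<Sum>i\<in>A. \<Sum>j\<in>A. (x i * y i) * (x j * y j)) = (\<Sum>i\<in>A. x i * y i)^2"
    by (simp add: sum_product power2_eq_square)
  finally show ?thesis by simp
qed

primrec wp :: "nat \<Rightarrow> (nat \<Rightarrow> nat \<Rightarrow> real) \<Rightarrow> nat \<Rightarrow> nat \<Rightarrow> nat \<Rightarrow> real" where
  "wp n M 0 u w = (if u = w then 1 else 0)"
| "wp n M (Suc k) u w = (\<Sum>y<n. wp n M k u y * M y w)"

lemma wp_add: "u < n \<Longrightarrow> w < n \<Longrightarrow> wp n M (a + b) u w = (\<Sum>y<n. wp n M a u y * wp n M b y w)"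
proof (induct b arbitrary: w)
  case 0
  then show ?case by (simp add: if_distrib[of "\<lambda>z. _ * z"] sum.If_cases)
next
  case (Suc b)
  have "wp n M (a + Suc b) u w = (\<Sum>z<n. wp n M (a + b) u z * M z w)" by simp
  also have "\<dots> = (\<Sum>z<n. \<Sum>y<n. wp n M a u y * wp n M b y z * M z w)"
    using Suc by (simp add: sum_distrib_right mult.assoc)
  also have "\<dots> = (\<Sum>y<n. wp n M a u y * wp n M (Suc b) y w)"
    by (subst sum.swap) (simp add: sum_distrib_left mult.assoc)
  finally show ?case .
qed

lemma wp_nonneg: "(\<And>y w. 0 \<le> M y w) \<Longrightarrow> 0 \<le> wp n M k u w"
  by (induct k arbitrary: w) (auto intro!: sum_nonneg)

lemma wp_rowsum:
  assumes "\<And>y. y < n \<Longrightarrow> (\<Sum>w<n. M y w) = 1" "u < n"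
  shows "(\<Sum>w<n. wp n M k u w) = 1"
proof (induct k)
  case 0 then show ?case using assms(2) by (simp add: sum.If_cases)
next
  case (Suc k)
  have "(\<Sum>w<n. wp n M (Suc k) u w) = (\<Sum>y<n. wp n M k u y * (\<Sum>w<n. M y w))"
    by (simp add: sum_distrib_left) (rule sum.swap)
  also have "\<dots> = (\<Sum>y<n. wp n M k u y)" using assms(1) by simp
  finally show ?case using Suc by simp
qed

lemma wp_sym:
  assumes "\<And>y w. M y w = M w y" "u < n" "w < n"
  shows "wp n M k u w = wp n M k w u"
  using assms(2,3)
proof (induct k arbitrary: u w)
  case 0 then show ?case by simp
next
  case (Suc k)
  have "wp n M (Suc k) u w = (\<Sum>y<n. wp n M k u y * M y w)" by simp
  also have "\<dots> = (\<Sum>y<n. M w y * wp n M k y u)"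
    using Suc assms(1) by (intro sum.cong refl) (auto simp: mult.commute)
  also have "\<dots> = (\<Sum>y<n. wp n M 1 w y * wp n M k y u)"
    using Suc.prems by (intro sum.cong refl) (simp add: if_distrib[of "\<lambda>z. z * _"] sum.If_cases)
  also have "\<dots> = wp n M (1 + k) w u" using wp_add[of w n u M 1 k] Suc.prems by simp
  finally show ?case by simp
qed

lemma wp_mat:
  assumes "A \<in> carrier_mat n n" "\<And>y w. y < n \<Longrightarrow> w < n \<Longrightarrow> A $$ (y,w) = M y w" "u < n" "w < n"
  shows "(A ^\<^sub>m k) $$ (u,w) = wp n M k u w"
  using assms(3,4)
proof (induct k arbitrary: w)
  case 0 then show ?case using assms(1) by simp
next
  case (Suc k)
  have "(A ^\<^sub>m Suc k) $$ (u,w) = (A ^\<^sub>m k * A) $$ (u,w)" by simp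
  also have "\<dots> = (\<Sum>y<n. (A ^\<^sub>m k) $$ (u,y) * A $$ (y,w))"
    by (rule mult_entry[OF _ assms(1)]) (use assms(1) Suc in auto)
  also have "\<dots> = wp n M (Suc k) u w" using Suc assms(2) by simp
  finally show ?case .
qed


locale swalk =
  fixes n :: nat and M :: "nat \<Rightarrow> nat \<Rightarrow> real"
  assumes n0: "0 < n"
    and Msym: "\<And>y w. M y w = M w y"
    and Mnn: "\<And>y w. 0 \<le> M y w"
    and Mrow: "\<And>y. y < n \<Longrightarrow> (\<Sum>w<n. M y w) = 1"
begin

abbreviation "p \<equiv> wp n M"

definition F :: "nat \<Rightarrow> nat \<Rightarrow> real" where
  "F u k = (\<Sum>w<n. (p k u w - 1 / real n)^2)"

lemma F_nonneg: "0 \<le> F u k" unfolding F_def by (intro sum_nonneg) simp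

lemma p_rowsum: "u < n \<Longrightarrow> (\<Sum>w<n. p k u w) = 1" by (rule wp_rowsum) (use Mrow in auto)

lemma p_sym: "u < n \<Longrightarrow> w < n \<Longrightarrow> p k u w = p k w u" by (rule wp_sym[OF Msym])

lemma p_nonneg: "0 \<le> p k u w" by (rule wp_nonneg) (rule Mnn)

lemma F_eq: assumes u: "u < n" shows "F u k = p (2*k) u u - 1 / real n"
proof -
  have "F u k = (\<Sum>w<n. p k u w * p k u w) - 2 / real n * (\<Sum>w<n. p k u w) + real n * (1 / real n)^2"
    unfolding F_def by (simp add: power2_eq_square algebra_simps sum_subtractf sum.distrib sum_distrib_left)
  also have "(\<Sum>w<n. p k u w * p k u w) = (\<Sum>w<n. p k u w * p k w u)"
    using u p_sym by (intro sum.cong refl) auto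
  also have "\<dots> = p (k + k) u u" using wp_add[OF u u] by simp
  also have "\<dots> = p (2*k) u u" by (simp add: mult_2)
  finally have "F u k = p (2 * k) u u - 2 / real n * 1 + real n * (1 / real n)\<^sup>2" using p_rowsum[OF u] by simp
  thus ?thesis using n0 by (simp add: power2_eq_square field_simps)
qed

lemma F_double: assumes u: "u < n" shows "(F u k)^2 \<le> F u (2*k)"
proof -
  define x where "x w = (if w = u then 1 else 0) - 1 / real n" for w
  define y where "y w = p (2*k) u w - 1 / real n" for w
  have sy: "(\<Sum>w<n. y w) = 0" unfolding y_def using p_rowsum[OF u] n0 by (simp add: sum_subtractf)
  have "(\<Sum>w<n. x w * y w) = (\<Sum>w<n. (if w = u then y w else 0) - 1 / real n * y w)"
    unfolding x_def by (intro sum.cong refl) (auto simp: algebra_simps)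
  also have "\<dots> = y u - 1 / real n * (\<Sum>w<n. y w)"
    using u by (simp add: sum_subtractf sum_divide_distrib[symmetric] sum.delta)
  finally have "(\<Sum>w<n. x w * y w) = y u - 1 / real n * (\<Sum>w<n. y w)" .
  hence xy: "(\<Sum>w<n. x w * y w) = F u k" using sy F_eq[OF u] unfolding y_def by simp
  have sx: "(\<Sum>w<n. (x w)^2) = 1 - 1 / real n"
  proof -
    have "(\<Sum>w<n. (x w)^2) = (\<Sum>w<n. (if w = u then 1 - 2 / real n else 0) + 1 / real n ^ 2)"
      unfolding x_def by (intro sum.cong refl) (auto simp: power2_eq_square field_simps)
    also have "\<dots> = (1 - 2 / real n) + real n / real n ^ 2"
      using u by (simp add: sum.distrib sum.delta)
    finally show ?thesis using n0 by (simp add: power2_eq_square field_simps)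
  qed
  have syy: "(\<Sum>w<n. (y w)^2) = F u (2*k)" unfolding y_def F_def by simp
  have "(F u k)^2 \<le> (1 - 1 / real n) * F u (2*k)" using cs_ineq[of x y "{..<n}"] xy sx syy by simp
  also have "\<dots> \<le> 1 * F u (2*k)" using F_nonneg[of u "2*k"] n0 by (intro mult_right_mono) auto
  finally show ?thesis by simp
qed

lemma F_iter: assumes u: "u < n" shows "(F u k)^(2^m) \<le> F u (2^m * k)"
proof (induct m)
  case 0 then show ?case by simp
next
  case (Suc m)
  have "(F u k)^(2^Suc m) = ((F u k)^(2^m))^2" by (simp only: power_Suc2 power_mult)
  also have "\<dots> \<le> (F u (2^m * k))^2"
    by (rule power_mono[OF Suc zero_le_power[OF F_nonneg]])
  also have "\<dots> \<le> F u (2 * (2^m * k))" by (rule F_double[OF u])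
  also have "2 * (2^m * k) = 2^Suc m * k" by simp
  finally show ?case .
qed

lemma spectral_pointwise:
  assumes tb: "\<And>k. (\<Sum>i<n. p (2*k) i i) \<le> 1 + real (n - 1) * \<rho>0 ^ (2*k)"
    and r0: "0 < \<rho>0" and u: "u < n" and w: "w < n"
  shows "\<bar>p k u w - 1 / real n\<bar> \<le> \<rho>0 ^ k"
proof -
  have Fb: "F u j \<le> real n * \<rho>0 ^ (2*j)" for j
  proof -
    have "(\<Sum>i<n. F i j) = (\<Sum>i<n. p (2*j) i i - 1 / real n)"
      by (intro sum.cong refl) (simp add: F_eq)
    also have "\<dots> = (\<Sum>i<n. p (2*j) i i) - 1"
      using n0 by (simp add: sum_subtractf)
    finally have "(\<Sum>i<n. F i j) = (\<Sum>i<n. p (2*j) i i) - 1" .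
    moreover have "real (n - 1) * \<rho>0 ^ (2*j) \<le> real n * \<rho>0 ^ (2*j)"
      using r0 by (intro mult_right_mono) auto
    ultimately have "(\<Sum>i<n. F i j) \<le> real n * \<rho>0 ^ (2*j)" using tb[of j] by linarith
    moreover have "F u j \<le> (\<Sum>i<n. F i j)"
      using u by (intro member_le_sum) (auto intro: F_nonneg)
    ultimately show ?thesis by linarith
  qed
  define a where "a = \<rho>0 ^ (2*k)"
  have a0: "0 < a" unfolding a_def using r0 by simp
  have Fk: "F u k \<le> a"
  proof (rule ccontr)
    assume "\<not> ?thesis"
    define r where "r = F u k / a"
    have r1: "r > 1" unfolding r_def using a0 \<open>\<not> F u k \<le> a\<close> by simp
    have rb: "r ^ (2^m) \<le> real n" for m
    proof -
      have "(F u k)^(2^m) \<le> real n * \<rho>0 ^ (2 * (2^m * k))" by (rule order_trans[OF F_iter[OF u, of k m] Fb[of "2^m * k"]])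
      also have "\<rho>0 ^ (2 * (2^m * k)) = a ^ (2^m)"
      proof -
        have "2 * (2^m * k) = (2*k) * 2^m" by simp
        thus ?thesis unfolding a_def by (simp only: power_mult)
      qed
      finally have "(F u k)^(2^m) \<le> real n * a ^ (2^m)" .
      moreover have "(F u k)^(2^m) = r^(2^m) * a^(2^m)" unfolding r_def using a0 by (simp add: power_divide)
      ultimately have "r^(2^m) * a^(2^m) \<le> real n * a ^ (2^m)" by simp
      moreover have "0 < a^(2^m)" using a0 by simp
      ultimately show ?thesis by (simp only: mult_le_cancel_right_pos)
    qed
    have bb: "1 + real m * (r - 1) \<le> r ^ (2^m)" for m
    proof -
      have "1 + real (2^m) * (r - 1) \<le> (1 + (r - 1)) ^ (2^m)" by (rule Bernoulli_inequality) (use r1 in auto)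
      moreover have "real m \<le> real (2^m)" by (simp add: less_imp_le_nat less_exp)
      moreover have "real m * (r - 1) \<le> real (2^m) * (r - 1)" using r1 calculation(2) by (intro mult_right_mono) auto
      moreover have "(1 + (r - 1))^(2^m) = r^(2^m)" by simp
      ultimately show ?thesis by linarith
    qed
    obtain m :: nat where m: "real n / (r - 1) < real m" using reals_Archimedean2 by blast
    have "real n < real m * (r - 1)" using m r1 by (simp add: pos_divide_less_eq)
    moreover have "1 + real m * (r - 1) \<le> real n" using bb[of m] rb[of m] by linarith
    ultimately show False by linarith
  qed
  have "(p k u w - 1 / real n)^2 \<le> F u k"
    unfolding F_def using w by (intro member_le_sum) auto
  moreover have "a = (\<rho>0 ^ k)^2" unfolding a_def power_mult[symmetric] by (simp only: mult.commute)
  ultimately have "(p k u w - 1 / real n)^2 \<le> (\<rho>0 ^ k)^2" using Fk by simp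
  hence "\<bar>p k u w - 1 / real n\<bar>^2 \<le> (\<rho>0 ^ k)^2" by (simp only: power2_abs)
  thus ?thesis by (rule power2_le_imp_le) (rule less_imp_le[OF zero_less_power[OF r0]])
qed

end



primrec bk :: "nat \<Rightarrow> (nat \<Rightarrow> nat \<Rightarrow> real) \<Rightarrow> nat \<Rightarrow> nat \<Rightarrow> nat \<Rightarrow> nat \<Rightarrow> nat \<Rightarrow> real" where
  "bk n M v 0 k u w = (if k = 0 \<and> u = w then 1 else 0)"
| "bk n M v (Suc t) k u w = (\<Sum>y<n. (if y = v then (case k of 0 \<Rightarrow> 0 | Suc j \<Rightarrow> bk n M v t j u y)
      else bk n M v t k u y) * M y w)"

lemma bk_zero: "t < k \<Longrightarrow> bk n M v t k u w = 0"
proof (induct t arbitrary: k w)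
  case 0 then show ?case by simp
next
  case (Suc t)
  show ?case
  proof (simp, intro sum.neutral ballI)
    fix y
    show "(if y = v then (case k of 0 \<Rightarrow> 0 | Suc j \<Rightarrow> bk n M v t j u y) else bk n M v t k u y) * M y w = 0"
      using Suc by (cases k) auto
  qed
qed

lemma bk_nonneg: "(\<And>y w. 0 \<le> M y w) \<Longrightarrow> 0 \<le> bk n M v t k u w"
proof (induct t arbitrary: k w)
  case 0 then show ?case by simp
next
  case (Suc t)
  show ?case
    by (simp, intro sum_nonneg mult_nonneg_nonneg) (use Suc in \<open>auto split: nat.split\<close>)
qed

lemma bk_shift:
  "(\<Sum>k\<le>Suc t. f k * (case k of 0 \<Rightarrow> 0 | Suc j \<Rightarrow> (h j :: real))) = (\<Sum>j\<le>t. f (Suc j) * h j)"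
  by (subst sum.atMost_Suc_shift) simp

lemma bk_last:
  "(\<Sum>k\<le>Suc t. f k * bk n M v t k u y) = (\<Sum>k\<le>t. f k * bk n M v t k u y)"
  using bk_zero[of t "Suc t" n M v u y] by simp

lemma bk_weighted:
  fixes f :: "nat \<Rightarrow> real"
  shows "(\<Sum>k\<le>Suc t. f k * bk n M v (Suc t) k u w) =
    (\<Sum>y<n. (if y = v then (\<Sum>j\<le>t. f (Suc j) * bk n M v t j u y) else (\<Sum>k\<le>t. f k * bk n M v t k u y)) * M y w)"
proof -
  define X where "X k y = (if y = v then (case k of 0 \<Rightarrow> 0 | Suc j \<Rightarrow> bk n M v t j u y) else bk n M v t k u y)" for k y
  have "(\<Sum>k\<le>Suc t. f k * bk n M v (Suc t) k u w) = (\<Sum>k\<le>Suc t. \<Sum>y<n. f k * (X k y * M y w))"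
    unfolding bk.simps X_def sum_distrib_left ..
  also have "\<dots> = (\<Sum>y<n. \<Sum>k\<le>Suc t. f k * (X k y * M y w))" by (rule sum.swap)
  also have "\<dots> = (\<Sum>y<n. (\<Sum>k\<le>Suc t. f k * X k y) * M y w)"
    by (simp only: sum_distrib_right mult.assoc)
  also have "\<dots> = (\<Sum>y<n. (\<Sum>k\<le>Suc t. f k * (if y = v then (case k of 0 \<Rightarrow> 0 | Suc j \<Rightarrow> bk n M v t j u y)
      else bk n M v t k u y)) * M y w)" unfolding X_def ..
  also have "\<dots> = (\<Sum>y<n. (if y = v then (\<Sum>j\<le>t. f (Suc j) * bk n M v t j u y) else (\<Sum>k\<le>t. f k * bk n M v t k u y)) * M y w)"
  proof (intro sum.cong refl)
    fix y
    show "(\<Sum>k\<le>Suc t. f k * (if y = v then (case k of 0 \<Rightarrow> 0 | Suc j \<Rightarrow> bk n M v t j u y)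
      else bk n M v t k u y)) * M y w = (if y = v then (\<Sum>j\<le>t. f (Suc j) * bk n M v t j u y) else (\<Sum>k\<le>t. f k * bk n M v t k u y)) * M y w"
    proof (cases "y = v")
      case True then show ?thesis by (simp only: simp_thms(6) if_True bk_shift)
    next
      case False then show ?thesis by (simp only: if_not_P[OF False] if_False bk_last)
    qed
  qed
  finally show ?thesis .
qed

lemma bk_sum: "(\<Sum>k\<le>t. bk n M v t k u w) = wp n M t u w"
proof (induct t arbitrary: w)
  case 0 then show ?case by simp
next
  case (Suc t)
  have "(\<Sum>k\<le>Suc t. 1 * bk n M v (Suc t) k u w) = (\<Sum>y<n. wp n M t u y * M y w)"
    unfolding bk_weighted using Suc by (intro sum.cong refl) simp
  thus ?case by simp
qed

lemma bk_theta: "(\<Sum>k\<le>t. \<theta> ^ k * bk n M v t k u w) = wp n (\<lambda>y w. (if y = v then \<theta> else 1) * M y w) t u w"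
proof (induct t arbitrary: w)
  case 0 then show ?case by simp
next
  case (Suc t)
  have "(\<Sum>k\<le>Suc t. \<theta> ^ k * bk n M v (Suc t) k u w) =
     (\<Sum>y<n. wp n (\<lambda>y w. (if y = v then \<theta> else 1) * M y w) t u y * ((if y = v then \<theta> else 1) * M y w))"
    unfolding bk_weighted
  proof (intro sum.cong refl)
    fix y
    show "(if y = v then \<Sum>j\<le>t. \<theta> ^ Suc j * bk n M v t j u y else \<Sum>k\<le>t. \<theta> ^ k * bk n M v t k u y) * M y w =
         wp n (\<lambda>y w. (if y = v then \<theta> else 1) * M y w) t u y * ((if y = v then \<theta> else 1) * M y w)"
    proof -
      have "(\<Sum>j\<le>t. \<theta> ^ Suc j * bk n M v t j u y) = \<theta> * (\<Sum>j\<le>t. \<theta> ^ j * bk n M v t j u y)"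
        by (simp add: sum_distrib_left mult.assoc)
      thus ?thesis using Suc[of y] by auto
    qed
  qed
  thus ?case by simp
qed

definition mm :: "nat \<Rightarrow> (nat \<Rightarrow> nat \<Rightarrow> real) \<Rightarrow> nat \<Rightarrow> nat \<Rightarrow> nat \<Rightarrow> nat \<Rightarrow> real" where
  "mm n M v t u w = (\<Sum>s<t. wp n M s u v * wp n M (t - s) v w)"

lemma bk_mean: assumes v: "v < n" shows "(\<Sum>k\<le>t. real k * bk n M v t k u w) = mm n M v t u w"
proof (induct t arbitrary: w)
  case 0 then show ?case by (simp add: mm_def)
next
  case (Suc t)
  have "(\<Sum>k\<le>Suc t. real k * bk n M v (Suc t) k u w) =
     (\<Sum>y<n. mm n M v t u y * M y w + (if y = v then wp n M t u v * M v w else 0))"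
    unfolding bk_weighted
  proof (intro sum.cong refl)
    fix y
    have e: "(\<Sum>j\<le>t. real (Suc j) * bk n M v t j u y) = mm n M v t u y + wp n M t u y"
      using Suc[of y] bk_sum[where t=t and u=u and w=y and n=n and M=M and v=v] by (simp add: algebra_simps sum.distrib)
    show "(if y = v then \<Sum>j\<le>t. real (Suc j) * bk n M v t j u y else \<Sum>k\<le>t. real k * bk n M v t k u y) * M y w =
         mm n M v t u y * M y w + (if y = v then wp n M t u v * M v w else 0)"
      using Suc[of y] e by (auto simp: algebra_simps)
  qed
  also have "\<dots> = (\<Sum>y<n. mm n M v t u y * M y w) + wp n M t u v * M v w"
    using v by (simp add: sum.distrib)
  also have "\<dots> = mm n M v (Suc t) u w"
  proof -
    have "mm n M v (Suc t) u w = (\<Sum>s<t. wp n M s u v * wp n M (Suc (t - s)) v w) + wp n M t u v * wp n M 1 v w"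
      unfolding mm_def by (simp add: Suc_diff_le)
    also have "wp n M 1 v w = M v w" using v by (simp add: if_distrib[of "\<lambda>z. z * _"] sum.If_cases)
    also have "(\<Sum>s<t. wp n M s u v * wp n M (Suc (t - s)) v w) = (\<Sum>y<n. mm n M v t u y * M y w)"
      unfolding mm_def by (simp add: sum_distrib_left sum_distrib_right mult.assoc) (rule sum.swap)
    finally show ?thesis by simp
  qed
  finally show ?case .
qed

lemma killed_lower:
  assumes Mnn: "\<And>y w. 0 \<le> M y w" and v: "v < n" and L: "0 < L" and th: "0 \<le> \<theta>" "\<theta> \<le> 1"
  shows "\<theta> ^ L * (wp n M t u w - mm n M v t u w / real L)
     \<le> wp n (\<lambda>y w. (if y = v then \<theta> else 1) * M y w) t u w"
proof -
  have "\<theta> ^ L * (1 - real k / real L) \<le> \<theta> ^ k" for k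
  proof (cases "k \<le> L")
    case True
    have "\<theta> ^ L * (1 - real k / real L) \<le> \<theta> ^ L * 1" using th L by (intro mult_left_mono) auto
    also have "\<dots> \<le> \<theta> ^ k" using th True by (simp add: power_decreasing)
    finally show ?thesis .
  next
    case False
    hence "1 - real k / real L \<le> 0" using L by (simp add: field_simps)
    hence "\<theta> ^ L * (1 - real k / real L) \<le> 0" using th by (simp add: mult_nonneg_nonpos)
    also have "0 \<le> \<theta> ^ k" using th by simp
    finally show ?thesis .
  qed
  hence "(\<Sum>k\<le>t. \<theta> ^ L * (1 - real k / real L) * bk n M v t k u w) \<le> (\<Sum>k\<le>t. \<theta> ^ k * bk n M v t k u w)"
    by (intro sum_mono mult_right_mono bk_nonneg[OF Mnn])
  moreover have "(\<Sum>k\<le>t. \<theta> ^ L * (1 - real k / real L) * bk n M v t k u w)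
      = \<theta> ^ L * ((\<Sum>k\<le>t. bk n M v t k u w) - (\<Sum>k\<le>t. real k * bk n M v t k u w) / real L)"
    by (simp add: algebra_simps sum_subtractf sum_distrib_left sum_divide_distrib)
  ultimately show ?thesis unfolding bk_sum bk_mean[OF v] bk_theta by simp
qed



definition GM :: "nat \<Rightarrow> (nat \<Rightarrow> nat \<Rightarrow> bool) \<Rightarrow> nat \<Rightarrow> nat \<Rightarrow> real" where
  "GM d E y w = (if E y w then 1 / real d else 0)"

locale gsetup =
  fixes n d :: nat and E :: "nat \<Rightarrow> nat \<Rightarrow> bool" and v :: nat
  assumes reg: "regular_graph_on n d E" and d3: "3 \<le> d" and v: "v < n"
begin

lemma Ebd: "E x y \<Longrightarrow> x < n \<and> y < n" using reg unfolding regular_graph_on_def by blast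
lemma Esym: "E x y = E y x" using reg unfolding regular_graph_on_def by blast
lemma Ecard: "x < n \<Longrightarrow> card {y. y < n \<and> E x y} = d" using reg unfolding regular_graph_on_def by blast

lemma n0: "0 < n" using v by simp

lemma GM_row: assumes y: "y < n" shows "(\<Sum>w<n. GM d E y w) = 1"
proof -
  have "(\<Sum>w<n. GM d E y w) = (\<Sum>w\<in>{w\<in>{..<n}. E y w}. 1 / real d)"
    unfolding GM_def by (rule sum.inter_filter[symmetric]) simp
  also have "{w\<in>{..<n}. E y w} = {w. w < n \<and> E y w}" by auto
  also have "(\<Sum>w\<in>{w. w < n \<and> E y w}. 1 / real d) = real d * (1 / real d)"
    using Ecard[OF y] by simp
  also have "\<dots> = 1" using d3 by simp
  finally show ?thesis .
qed

sublocale sw: swalk n "GM d E"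
proof
  show "0 < n" by (rule n0)
  show "GM d E y w = GM d E w y" for y w unfolding GM_def using Esym[of y w] by simp
  show "0 \<le> GM d E y w" for y w unfolding GM_def by simp
  show "y < n \<Longrightarrow> (\<Sum>w<n. GM d E y w) = 1" for y by (rule GM_row)
qed

lemma TM: "trans_mat n d E \<in> carrier_mat n n" unfolding trans_mat_def by simp

lemma TM_entry: "y < n \<Longrightarrow> w < n \<Longrightarrow> trans_mat n d E $$ (y,w) = GM d E y w"
  unfolding trans_mat_def GM_def by simp

lemma pointwise:
  assumes nb: "nontrivial_eigs_bounded (trans_mat n d E) \<rho>" and r: "\<rho> \<le> \<rho>0" "0 < \<rho>0"
    and u: "u < n" and w: "w < n"
  shows "\<bar>wp n (GM d E) k u w - 1 / real n\<bar> \<le> \<rho>0 ^ k"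
proof (rule sw.spectral_pointwise[OF _ r(2) u w])
  fix k
  have "(\<Sum>i<n. wp n (GM d E) (2*k) i i) = (\<Sum>i<n. (trans_mat n d E ^\<^sub>m (2*k)) $$ (i,i))"
    by (intro sum.cong refl, rule wp_mat[OF TM, symmetric]) (auto simp: TM_entry)
  also have "\<dots> \<le> 1 + real (n - 1) * \<rho>0 ^ (2*k)"
    by (rule trace_bound[OF TM nb r(1)]) (use r in auto)
  finally show "(\<Sum>i<n. wp n (GM d E) (2*k) i i) \<le> 1 + real (n - 1) * \<rho>0 ^ (2*k)" .
qed

definition "\<theta> = real d / (real d + 1)"

lemma srw_eq:
  assumes y: "y < n" and w: "w < n"
  shows "srw_step {0..n} (add_leaf n v E) y w = (if y = v then \<theta> else 1) * GM d E y w"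
proof -
  have al: "add_leaf n v E y w = E y w" using y w unfolding add_leaf_def by auto
  have set: "{z \<in> {0..n}. add_leaf n v E y z} = {z. z < n \<and> E y z} \<union> (if y = v then {n} else {})"
    using y unfolding add_leaf_def by (auto dest: Ebd)
  have card: "card {z \<in> {0..n}. add_leaf n v E y z} = d + (if y = v then 1 else 0)"
    unfolding set using Ecard[OF y] by (auto simp: card_insert_if)
  have key: "1 / real (d + 1) = real d / (real d + 1) * (1 / real d)" using d3 by simp
  show ?thesis
    unfolding srw_step_def al card GM_def \<theta>_def using key by auto
qed

lemma avoid_eq:
  assumes u: "u < n" and w: "w < n"
  shows "avoid_prob {0..n} (add_leaf n v E) n t u w = wp n (\<lambda>y w. (if y = v then \<theta> else 1) * GM d E y w) t u w"
  using w
proof (induct t arbitrary: w)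
  case 0 then show ?case by simp
next
  case (Suc t)
  define f where "f y = avoid_prob {0..n} (add_leaf n v E) n t u y * (if t = 0 \<or> y \<noteq> n then 1 else 0) * srw_step {0..n} (add_leaf n v E) y w" for y
  have split: "{0..n} = insert n {..<n}" by auto
  have tn: "f n = 0"
    unfolding f_def using u by (cases t) auto
  have "avoid_prob {0..n} (add_leaf n v E) n (Suc t) u w = (\<Sum>y\<in>{0..n}. f y)"
    unfolding avoid_prob.simps f_def ..
  also have "\<dots> = (\<Sum>y<n. f y)" unfolding split using tn by simp
  also have "\<dots> =
     (\<Sum>y<n. avoid_prob {0..n} (add_leaf n v E) n t u y * (if t = 0 \<or> y \<noteq> n then 1 else 0) * srw_step {0..n} (add_leaf n v E) y w)"
    unfolding f_def ..
  also have "\<dots> = (\<Sum>y<n. wp n (\<lambda>y w. (if y = v then \<theta> else 1) * GM d E y w) t u y * ((if y = v then \<theta> else 1) * GM d E y w))"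
    using Suc by (intro sum.cong refl) (simp add: srw_eq)
  finally show ?case by simp
qed

lemma theta_bounds: "0 \<le> \<theta>" "\<theta> \<le> 1" unfolding \<theta>_def by auto

lemma main_bound:
  fixes \<rho> \<rho>0 :: real and L :: nat
  assumes nb: "nontrivial_eigs_bounded (trans_mat n d E) \<rho>" and r: "\<rho> \<le> \<rho>0" "1/2 \<le> \<rho>0" "\<rho>0 < 1"
    and n2: "2 \<le> n" and u: "u < n"
    and Lp: "0 < L" and LB: "8 * (2 + 1 / (1 - \<rho>0)) \<le> real L"
  defines "T0 \<equiv> (2 / (- ln \<rho>0)) * ln (real n)"
  shows "\<exists>S \<subseteq> {0..n}. real (card S) \<ge> real n - (T0 + 1) \<and>
     (\<forall>w\<in>S. \<forall>t::nat. 2 * T0 \<le> real t \<and> t \<le> n \<longrightarrow>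
        avoid_prob {0..n} (add_leaf n v E) n t u w \<ge> \<theta> ^ L / 4 / real n)"
proof -
  let ?p = "wp n (GM d E)"
  have r0: "0 < \<rho>0" using r by simp
  have lnr: "ln \<rho>0 < 0" using r0 r by simp
  have nr: "0 < real n" using n2 by simp
  have lnn: "0 \<le> ln (real n)" using n2 by simp
  have T0nn: "0 \<le> T0" unfolding T0_def using lnr lnn by (intro mult_nonneg_nonneg) auto
  have T0ln: "T0 * ln \<rho>0 = - 2 * ln (real n)" unfolding T0_def using lnr by (simp add: field_simps)
  have small: "\<rho>0 ^ s \<le> 1 / (2 * real n)" if s: "T0 \<le> real s" for s
  proof -
    have "real s * ln \<rho>0 \<le> T0 * ln \<rho>0" using s lnr by (intro mult_right_mono_neg) auto
    hence "ln (\<rho>0 ^ s * real n ^ 2) \<le> 0" using r0 nr T0ln by (simp add: ln_mult ln_realpow)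
    hence "\<rho>0 ^ s * real n ^ 2 \<le> 1" using r0 nr by (subst (asm) ln_le_zero_iff) auto
    hence "\<rho>0 ^ s \<le> 1 / real n ^ 2" using nr by (simp add: field_simps)
    also have "\<dots> \<le> 1 / (2 * real n)" using n2 nr by (simp add: field_simps power2_eq_square)
    finally show ?thesis .
  qed
  have pb: "\<bar>?p k a b - 1 / real n\<bar> \<le> \<rho>0 ^ k" if "a < n" "b < n" for k a b
    by (rule pointwise[OF nb r(1) r0 that])
  have upper: "?p s a b \<le> 2 / real n" if "T0 \<le> real s" "a < n" "b < n" for s a b
  proof -
    have "?p s a b \<le> 1 / real n + \<rho>0 ^ s" using pb[OF that(2,3), of s] by linarith
    also have "\<dots> \<le> 1 / real n + 1 / (2 * real n)" using small[OF that(1)] by simp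
    also have "\<dots> \<le> 2 / real n" using nr by (simp add: field_simps)
    finally show ?thesis .
  qed
  define R where "R = nat \<lceil>T0\<rceil>"
  have RT: "real R \<le> T0 + 1" unfolding R_def using T0nn by simp
  have TR: "T0 \<le> real R" unfolding R_def using T0nn by linarith
  define g where "g w = (\<Sum>r<R. ?p (Suc r) v w)" for w
  have gnn: "0 \<le> g w" for w unfolding g_def by (intro sum_nonneg sw.p_nonneg)
  have sumg: "(\<Sum>w<n. g w) = real R"
  proof -
    have "(\<Sum>w<n. g w) = (\<Sum>r<R. \<Sum>w<n. ?p (Suc r) v w)" unfolding g_def by (rule sum.swap)
    also have "\<dots> = (\<Sum>r<R. 1)" using v by (intro sum.cong refl) (rule sw.p_rowsum)
    finally show ?thesis by simp
  qed
  define S where "S = {w. w < n \<and> g w \<le> 1}"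
  define Sc where "Sc = {w. w < n \<and> \<not> g w \<le> 1}"
  have cardSc: "real (card Sc) \<le> real R"
  proof -
    have "real (card Sc) = (\<Sum>w\<in>Sc. 1)" by simp
    also have "\<dots> \<le> (\<Sum>w\<in>Sc. g w)" unfolding Sc_def by (intro sum_mono) auto
    also have "\<dots> \<le> (\<Sum>w<n. g w)" unfolding Sc_def by (intro sum_mono2) (auto intro: gnn)
    finally show ?thesis using sumg by simp
  qed
  have cardS: "card S + card Sc = n"
  proof -
    have "S \<union> Sc = {..<n}" "S \<inter> Sc = {}" unfolding S_def Sc_def by auto
    moreover have "finite S" "finite Sc" unfolding S_def Sc_def by auto
    ultimately show ?thesis using card_Un_disjoint[of S Sc] by simp
  qed
  have cS: "real (card S) \<ge> real n - (T0 + 1)"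
  proof -
    have "real (card S) = real n - real (card Sc)" using cardS by (simp add: of_nat_eq_iff[symmetric])
    thus ?thesis using cardSc RT by linarith
  qed
  have main: "avoid_prob {0..n} (add_leaf n v E) n t u w \<ge> \<theta> ^ L / 4 / real n"
    if w: "w \<in> S" and t1: "2 * T0 \<le> real t" and t2: "t \<le> n" for w t
  proof -
    have wn: "w < n" and gw: "g w \<le> 1" using w unfolding S_def by auto
    have pt: "?p t u w \<ge> 1 / (2 * real n)"
    proof -
      have "1 / real n - \<rho>0 ^ t \<le> ?p t u w" using pb[OF u wn, of t] by linarith
      moreover have "\<rho>0 ^ t \<le> 1 / (2 * real n)" using small[of t] t1 T0nn by simp
      moreover have "1 / real n - 1 / (2 * real n) = 1 / (2 * real n)" using nr by (simp add: field_simps)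
      ultimately show ?thesis by linarith
    qed
    have sum1: "(\<Sum>s<t. ?p s u v) \<le> 1 + 1 / (1 - \<rho>0)"
    proof -
      have "(\<Sum>s<t. ?p s u v) \<le> (\<Sum>s<t. 1 / real n + \<rho>0 ^ s)"
        using pb[OF u v] by (intro sum_mono) (smt (verit))
      also have "\<dots> = real t / real n + (\<Sum>s<t. \<rho>0 ^ s)" by (simp add: sum.distrib)
      also have "(\<Sum>s<t. \<rho>0 ^ s) = (1 - \<rho>0 ^ t) / (1 - \<rho>0)" using r by (simp add: sum_gp_strict)
      also have "\<dots> \<le> 1 / (1 - \<rho>0)" using r r0 by (intro divide_right_mono) auto
      also have "real t / real n \<le> 1" using t2 nr by simp
      finally show ?thesis by simp
    qed
    define h where "h k = (if real k < T0 then ?p k v w else 0)" for k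
    have sum2: "(\<Sum>s<t. h (t - s)) \<le> g w"
    proof -
      have "(\<Sum>s<t. h (t - s)) = (\<Sum>s<t. h (Suc (t - Suc s)))"
        by (intro sum.cong refl) (simp add: Suc_diff_Suc)
      also have "\<dots> = (\<Sum>r<t. h (Suc r))" by (rule sum.nat_diff_reindex)
      also have "\<dots> = (\<Sum>r\<in>{r\<in>{..<t}. real (Suc r) < T0}. ?p (Suc r) v w)"
        unfolding h_def by (rule sum.inter_filter[symmetric]) simp
      also have "\<dots> \<le> (\<Sum>r<R. ?p (Suc r) v w)"
      proof (intro sum_mono2)
        show "{r \<in> {..<t}. real (Suc r) < T0} \<subseteq> {..<R}" using TR by auto
      qed (auto simp del: wp.simps intro: sw.p_nonneg)
      finally show ?thesis unfolding g_def .
    qed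
    have trm: "?p s u v * ?p (t - s) v w \<le> 2 / real n * ?p s u v + 2 / real n * h (t - s)"
      if s: "s < t" for s
    proof (cases "real (t - s) < T0")
      case True
      have "T0 \<le> real s" using True t1 s by (simp add: of_nat_diff)
      hence "?p s u v \<le> 2 / real n" by (rule upper[OF _ u v])
      hence "?p s u v * ?p (t - s) v w \<le> 2 / real n * ?p (t - s) v w"
        by (intro mult_right_mono sw.p_nonneg)
      moreover have "0 \<le> 2 / real n * ?p s u v" using nr by (intro mult_nonneg_nonneg sw.p_nonneg) auto
      ultimately show ?thesis unfolding h_def using True by simp
    next
      case False
      hence "?p (t - s) v w \<le> 2 / real n" by (intro upper v wn) simp
      hence "?p s u v * ?p (t - s) v w \<le> ?p s u v * (2 / real n)"
        by (intro mult_left_mono sw.p_nonneg)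
      thus ?thesis unfolding h_def using False by (simp add: mult.commute)
    qed
    define B where "B = 2 * (2 + 1 / (1 - \<rho>0))"
    have mmb: "mm n (GM d E) v t u w \<le> B / real n"
    proof -
      have "mm n (GM d E) v t u w \<le> (\<Sum>s<t. 2 / real n * ?p s u v + 2 / real n * h (t - s))"
        unfolding mm_def by (intro sum_mono trm) simp
      also have "\<dots> = 2 / real n * ((\<Sum>s<t. ?p s u v) + (\<Sum>s<t. h (t - s)))"
        by (simp only: sum.distrib sum_distrib_left distrib_left)
      also have "\<dots> \<le> 2 / real n * ((1 + 1 / (1 - \<rho>0)) + 1)"
        using sum1 sum2 gw nr by (intro mult_left_mono) auto
      also have "\<dots> = B / real n" unfolding B_def by (simp add: field_simps)
      finally show ?thesis .
    qed
    have Lr: "0 < real L" using Lp by simp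
    have "mm n (GM d E) v t u w / real L \<le> B / real n / real L"
      by (rule divide_right_mono[OF mmb]) (use Lr in simp)
    also have "B / real n / real L \<le> 1 / (4 * real n)"
    proof -
      have "4 * B \<le> real L" using LB unfolding B_def by simp
      hence "B / real L \<le> 1 / 4" using Lr by (simp add: divide_le_eq)
      hence "(B / real L) / real n \<le> (1 / 4) / real n" using nr by (intro divide_right_mono) auto
      thus ?thesis by (simp add: mult.commute)
    qed
    finally have mmL: "mm n (GM d E) v t u w / real L \<le> 1 / (4 * real n)" .
    have "1 / (4 * real n) \<le> ?p t u w - mm n (GM d E) v t u w / real L"
      using pt mmL nr by (simp add: field_simps)
    hence "\<theta> ^ L * (1 / (4 * real n)) \<le> \<theta> ^ L * (?p t u w - mm n (GM d E) v t u w / real L)"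
      using theta_bounds by (intro mult_left_mono) auto
    also have "\<dots> \<le> wp n (\<lambda>y w. (if y = v then \<theta> else 1) * GM d E y w) t u w"
      by (rule killed_lower[OF sw.Mnn v Lp theta_bounds])
    also have "\<dots> = avoid_prob {0..n} (add_leaf n v E) n t u w" by (rule avoid_eq[OF u wn, symmetric])
    finally show ?thesis by simp
  qed
  have "S \<subseteq> {0..n}" unfolding S_def by auto
  thus ?thesis using cS main by blast
qed

end

theorem lemma3p2:
  fixes d :: nat and \<rho> :: real
  assumes "d \<ge> 3" and "\<rho> < 1"
  shows "\<exists>C c :: real. \<exists>\<epsilon> :: nat \<Rightarrow> real. C > 0 \<and> c > 0 \<and> \<epsilon> \<longlonglongrightarrow> 0 \<and>
    (\<exists>N. \<forall>n \<ge> N. \<forall>E v.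
       regular_graph_on n d E \<and> nontrivial_eigs_bounded (trans_mat n d E) \<rho> \<and> v < n \<longrightarrow>
       (\<forall>u \<le> n. u \<noteq> n \<longrightarrow>
          (\<exists>S \<subseteq> {0..n}. real (card S) \<ge> (1 - \<epsilon> n) * real n \<and>
             (\<forall>w \<in> S. \<forall>t::nat. C * ln (real n) \<le> real t \<and> t \<le> n \<longrightarrow>
                avoid_prob {0..n} (add_leaf n v E) n t u w \<ge> c / real n))))"
proof -
  define \<rho>0 where "\<rho>0 = max \<rho> (1/2)"
  have r: "\<rho> \<le> \<rho>0" "1/2 \<le> \<rho>0" "\<rho>0 < 1" unfolding \<rho>0_def using assms by auto
  have lnr: "ln \<rho>0 < 0" using r by simp
  define C where "C = 4 / (- ln \<rho>0)"
  define L where "L = nat \<lceil>8 * (2 + 1 / (1 - \<rho>0))\<rceil> + 1"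
  define c where "c = (real d / (real d + 1)) ^ L / 4"
  define \<epsilon> where "\<epsilon> n = ((2 / (- ln \<rho>0)) * ln (real n) + 1) / real n" for n :: nat
  have Cpos: "C > 0" unfolding C_def using lnr by simp
  have cpos: "c > 0" unfolding c_def using assms by simp
  have Lp: "0 < L" unfolding L_def by simp
  have LB: "8 * (2 + 1 / (1 - \<rho>0)) \<le> real L" unfolding L_def by linarith
  have lim: "\<epsilon> \<longlonglongrightarrow> 0"
  proof -
    have "(\<lambda>n. ln (real n) / real n) \<longlonglongrightarrow> 0"
      by (rule filterlim_compose[OF ln_x_over_x_tendsto_0 filterlim_real_sequentially])
    hence "(\<lambda>n. (2 / (- ln \<rho>0)) * (ln (real n) / real n) + 1 / real n) \<longlonglongrightarrow> (2 / (- ln \<rho>0)) * 0 + 0"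
      by (intro tendsto_add tendsto_mult tendsto_const lim_inverse_n')
    moreover have "\<epsilon> = (\<lambda>n. (2 / (- ln \<rho>0)) * (ln (real n) / real n) + 1 / real n)"
      unfolding \<epsilon>_def by (intro ext) (simp add: add_divide_distrib diff_divide_distrib divide_divide_eq_left)
    ultimately show ?thesis by simp
  qed
  have main: "\<exists>S \<subseteq> {0..n}. real (card S) \<ge> (1 - \<epsilon> n) * real n \<and>
             (\<forall>w \<in> S. \<forall>t::nat. C * ln (real n) \<le> real t \<and> t \<le> n \<longrightarrow>
                avoid_prob {0..n} (add_leaf n v E) n t u w \<ge> c / real n)"
    if n2: "2 \<le> n" and h: "regular_graph_on n d E" "nontrivial_eigs_bounded (trans_mat n d E) \<rho>" "v < n"
      and u: "u < n" for n E v u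
  proof -
    interpret gsetup n d E v using h assms by unfold_locales auto
    define T0 where "T0 = (2 / (- ln \<rho>0)) * ln (real n)"
    obtain S where S: "S \<subseteq> {0..n}" "real (card S) \<ge> real n - (T0 + 1)"
      "\<And>w t. w \<in> S \<Longrightarrow> 2 * T0 \<le> real t \<Longrightarrow> t \<le> n \<Longrightarrow> avoid_prob {0..n} (add_leaf n v E) n t u w \<ge> \<theta> ^ L / 4 / real n"
      using main_bound[OF h(2) r n2 u Lp LB] unfolding T0_def by blast
    have nr: "0 < real n" using n2 by simp
    have "(1 - \<epsilon> n) * real n = real n - (T0 + 1)" unfolding \<epsilon>_def T0_def using nr by (simp add: field_simps)
    moreover have "2 * T0 = C * ln (real n)" unfolding T0_def C_def by simp
    moreover have "\<theta> ^ L / 4 / real n = c / real n" unfolding c_def \<theta>_def by simp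
    ultimately show ?thesis using S by auto
  qed
  show ?thesis
    apply (rule exI[of _ C], rule exI[of _ c], rule exI[of _ \<epsilon>])
    apply (intro conjI Cpos cpos lim)
    apply (rule exI[of _ 2])
    using main by (metis le_neq_implies_less)
qed

end
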